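(* Let $n\ge k\ge 2$ be integers. For a probability vector $\lambda=(\lambda_1,\ldots,\lambda_n)$ (identified with the diagonal density matrix $\mathrm{diag}(\lambda_1,\ldots,\lambda_n)$) define $\rho^P(\lambda)\in\mathbb{R}^n$ by $\rho^P(\lambda)_i=\frac1k\sum_{j=i}^{i+k-1}\lambda_j$, indices taken modulo $n$ (this is the map induced by the POVM $P=(\tfrac1kQ_i)_{i=1}^n$, $Q_i$ the diagonal matrix with $1$ in positions $i,i+1,\ldots,i+k-1$ mod $n$ and $0$ elsewhere). Then the map $\lambda\mapsto\rho^P(\lambda)$ on probability vectors is injective (the POVM is informationally complete) if and only if $k$ and $n$ are coprime.
   Context: A probability vector in $\mathbb{R}^n$ has non-negative entries summing to $1$. The POVM is called informationally complete if the map $\rho\mapsto\rho^P$ on (here diagonal) density matrices is injective. *)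

theory Defs
  imports Complex_Main
begin

text \<open>Vectors in R^n are modelled as functions nat => real, indices 0..n-1
  (the paper's index i corresponds to i-1 here), zero outside.\<close>

definition prob_vecs :: "nat \<Rightarrow> (nat \<Rightarrow> real) set" where
  "prob_vecs n = {l. (\<forall>i<n. 0 \<le> l i) \<and> (\<forall>i\<ge>n. l i = 0) \<and> (\<Sum>i<n. l i) = 1}"

definition rhoP :: "nat \<Rightarrow> nat \<Rightarrow> (nat \<Rightarrow> real) \<Rightarrow> (nat \<Rightarrow> real)" where
  "rhoP n k l = (\<lambda>i. if i < n then (1 / real k) * (\<Sum>j=i..<i+k. l (j mod n)) else 0)"

end

theory Submission
  imports Defs
begin

lemma sum_periodic_shift:
  fixes h :: "nat \<Rightarrow> real"
  assumes "\<And>j. h (j+p) = h j"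
  shows "(\<Sum>j=a..<a+p. h j) = (\<Sum>j=0..<p. h j)"
proof (induction a)
  case 0 then show ?case by simp
next
  case (Suc a)
  show ?case
  proof (cases p)
    case 0 then show ?thesis by simp
  next
    case (Suc q)
    have "(\<Sum>j=a..<Suc (a+p). h j) = h a + (\<Sum>j=Suc a..<Suc (a+p). h j)"
      by (simp add: sum.atLeast_Suc_lessThan)
    moreover have "(\<Sum>j=a..<Suc (a+p). h j) = (\<Sum>j=a..<a+p. h j) + h (a+p)"
      by (simp add: sum.atLeastLessThan_Suc)
    ultimately show ?thesis using Suc.IH assms[of a] by simp
  qed
qed

lemma sum_periodic_mult:
  fixes h :: "nat \<Rightarrow> real"
  assumes "\<And>j. h (j+p) = h j"
  shows "(\<Sum>j=a..<a+q*p. h j) = real q * (\<Sum>j=0..<p. h j)"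
proof (induction q)
  case 0 then show ?case by simp
next
  case (Suc q)
  have "(\<Sum>j=a..<a+q*p. h j) + (\<Sum>j=a+q*p..<a+q*p+p. h j) = (\<Sum>j=a..<a+q*p+p. h j)"
    by (rule sum.atLeastLessThan_concat) auto
  moreover have "(\<Sum>j=a+q*p..<a+q*p+p. h j) = (\<Sum>j=0..<p. h j)"
    by (rule sum_periodic_shift[of h p, OF assms])
  ultimately show ?case using Suc.IH by (simp add: algebra_simps)
qed

lemma window_mod:
  fixes h :: "nat \<Rightarrow> real"
  assumes "0 < n"
  shows "(\<Sum>j=i..<i+k. h (j mod n)) = (\<Sum>j=i mod n..<i mod n+k. h (j mod n))"
proof -
  let ?c = "(i div n) * n"
  have i: "i = i mod n + ?c" by simp
  have "(\<Sum>j=i mod n + ?c..<i mod n + k + ?c. h (j mod n)) = (\<Sum>j=i mod n..<i mod n+k. h ((j + ?c) mod n))"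
    by (rule sum.shift_bounds_nat_ivl)
  also have "\<dots> = (\<Sum>j=i mod n..<i mod n+k. h (j mod n))" by simp
  finally show ?thesis using i by (metis add.commute add.left_commute)
qed

lemma inj_dir:
  fixes n k :: nat
  assumes "2 \<le> k" "k \<le> n" "coprime k n"
  shows "inj_on (rhoP n k) (prob_vecs n)"
proof (rule inj_onI)
  fix l m assume l: "l \<in> prob_vecs n" and m: "m \<in> prob_vecs n" and eq: "rhoP n k l = rhoP n k m"
  define d where "d = (\<lambda>j. l j - m j)"
  have n0: "0 < n" using assms by simp
  define S where "S = (\<lambda>i. \<Sum>j=i..<i+k. d (j mod n))"
  have S0: "S i = 0" if "i < n" for i
  proof -
    have "(1 / real k) * (\<Sum>j=i..<i+k. l (j mod n)) = (1 / real k) * (\<Sum>j=i..<i+k. m (j mod n))"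
      using fun_cong[OF eq, of i] that by (simp add: rhoP_def)
    then have "(\<Sum>j=i..<i+k. l (j mod n)) = (\<Sum>j=i..<i+k. m (j mod n))" using assms by simp
    then show ?thesis by (simp add: S_def d_def sum_subtractf)
  qed
  have Sall: "S i = 0" for i
    using S0[of "i mod n"] window_mod[OF n0, of d i k] n0 by (simp add: S_def)
  have step: "d ((i+k) mod n) = d (i mod n)" for i
  proof -
    have "(\<Sum>j=i..<Suc (i+k). d (j mod n)) = d (i mod n) + (\<Sum>j=Suc i..<Suc (i+k). d (j mod n))"
      by (rule sum.atLeast_Suc_lessThan) simp
    also have "\<dots> = d (i mod n) + S (Suc i)" by (simp add: S_def)
    finally have "(\<Sum>j=i..<Suc (i+k). d (j mod n)) = d (i mod n) + S (Suc i)" .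
    moreover have "(\<Sum>j=i..<Suc (i+k). d (j mod n)) = S i + d ((i+k) mod n)"
      by (simp add: sum.atLeastLessThan_Suc S_def)
    ultimately show ?thesis using Sall[of i] Sall[of "Suc i"] by simp
  qed
  have stept: "d ((i + t*k) mod n) = d (i mod n)" for i t
  proof (induction t)
    case 0 then show ?case by simp
  next
    case (Suc t)
    have "d ((i + Suc t*k) mod n) = d ((i + t*k + k) mod n)" by (simp add: algebra_simps)
    also have "\<dots> = d ((i + t*k) mod n)" using step[of "i+t*k"] by simp
    finally show ?case using Suc.IH by simp
  qed
  obtain x y where xy: "k * x = n * y + gcd k n" using bezout_nat[of k n] assms by auto
  have xy1: "k * x = n * y + 1" using xy assms(3) by simp
  have one: "d (Suc i mod n) = d (i mod n)" for i
  proof -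
    have "(i + x*k) mod n = (Suc i + y * n) mod n" using xy1 by (simp add: algebra_simps)
    also have "\<dots> = Suc i mod n" by simp
    finally show ?thesis using stept[of i x] by simp
  qed
  have const: "d (j mod n) = d 0" for j
    by (induction j) (use one n0 in auto)
  have "(\<Sum>i<n. d i) = 0" using l m by (simp add: prob_vecs_def d_def sum_subtractf)
  moreover have "(\<Sum>i<n. d i) = real n * d 0"
  proof -
    have "(\<Sum>i<n. d i) = (\<Sum>i<n. d 0)" using const by (intro sum.cong) (auto, metis mod_less)
    then show ?thesis by simp
  qed
  ultimately have "d 0 = 0" using n0 by simp
  then have dz: "d j = 0" if "j < n" for j using const[of j] that by simp
  show "l = m"
  proof
    fix j show "l j = m j"
    proof (cases "j < n")
      case True then show ?thesis using dz[OF True] by (simp add: d_def)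
    next
      case False then show ?thesis using l m by (simp add: prob_vecs_def)
    qed
  qed
qed

lemma noninj_dir:
  fixes n k :: nat
  assumes "2 \<le> k" "k \<le> n" "\<not> coprime k n"
  shows "\<not> inj_on (rhoP n k) (prob_vecs n)"
proof -
  define g where "g = gcd k n"
  have n0: "0 < n" using assms by simp
  have g2: "2 \<le> g"
  proof -
    have "g \<noteq> 1" using assms(3) by (simp add: g_def coprime_iff_gcd_eq_1)
    moreover have "g \<noteq> 0" using n0 by (simp add: g_def)
    ultimately show ?thesis by simp
  qed
  have gk: "g dvd k" and gn: "g dvd n" by (simp_all add: g_def)
  define f :: "nat \<Rightarrow> real" where "f r = (if r = 0 then 1 else 0) - (if r = 1 then 1 else 0)" for r
  define h where "h j = f (j mod g)" for j
  have hper: "h (j + g) = h j" for j by (simp add: h_def)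
  have fsum: "(\<Sum>j=0..<g. h j) = 0"
  proof -
    have "(\<Sum>j=0..<g. h j) = (\<Sum>j=0..<g. f j)" by (intro sum.cong) (auto simp: h_def)
    also have "\<dots> = 0" using g2 by (simp add: f_def sum_subtractf)
    finally show ?thesis .
  qed
  have hsum: "(\<Sum>j=a..<a+q*g. h j) = 0" for a q
    using sum_periodic_mult[of h g a q, OF hper] fsum by simp
  define l0 :: "nat \<Rightarrow> real" where "l0 i = (if i < n then 1 / real n else 0)" for i
  define l1 :: "nat \<Rightarrow> real" where "l1 i = (if i < n then (1 + h i / 2) / real n else 0)" for i
  have fb: "-1 \<le> f r \<and> f r \<le> 1" for r by (simp add: f_def)
  have l0p: "l0 \<in> prob_vecs n" using n0 by (simp add: prob_vecs_def l0_def)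
  have l1p: "l1 \<in> prob_vecs n"
  proof -
    have "0 \<le> l1 i" if "i < n" for i
    proof -
      have "-1 \<le> f (i mod g)" using fb by blast
      then have "0 \<le> 1 + h i / 2" by (simp add: h_def)
      then show ?thesis using that by (simp add: l1_def)
    qed
    moreover have "(\<Sum>i<n. l1 i) = 1"
    proof -
      obtain q where q: "n = q * g" using gn by (auto simp: dvd_def mult.commute)
      have "(\<Sum>i<n. l1 i) = (\<Sum>i=0..<n. 1 / real n + h i / (2 * real n))"
        by (intro sum.cong) (auto simp: l1_def field_simps)
      also have "\<dots> = 1 + (\<Sum>i=0..<0+q*g. h i) / (2 * real n)"
        using n0 q by (simp add: sum.distrib sum_divide_distrib)
      also have "\<dots> = 1" by (subst hsum[of 0 q]) simp
      finally show ?thesis .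
    qed
    ultimately show ?thesis by (auto simp: prob_vecs_def l1_def)
  qed
  have ne: "l0 \<noteq> l1"
  proof
    assume "l0 = l1"
    then have "l0 0 = l1 0" by simp
    then show False using n0 by (simp add: l0_def l1_def h_def f_def field_simps)
  qed
  have req: "rhoP n k l0 = rhoP n k l1"
  proof
    fix i
    show "rhoP n k l0 i = rhoP n k l1 i"
    proof (cases "i < n")
      case False then show ?thesis by (simp add: rhoP_def)
    next
      case True
      obtain q where q: "k = q * g" using gk by (auto simp: dvd_def mult.commute)
      have a: "(\<Sum>j=i..<i+k. l0 (j mod n)) = real k / real n"
        using n0 by (simp add: l0_def)
      have "(\<Sum>j=i..<i+k. l1 (j mod n)) = (\<Sum>j=i..<i+k. 1 / real n + h j / (2 * real n))"
        using n0 gn by (intro sum.cong) (auto simp: l1_def h_def field_simps mod_mod_cancel)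
      also have "\<dots> = real k / real n + (\<Sum>j=i..<i+q*g. h j) / (2 * real n)"
        using q by (simp add: sum.distrib sum_divide_distrib)
      also have "\<dots> = real k / real n" using hsum by simp
      finally show ?thesis using a True by (simp add: rhoP_def)
    qed
  qed
  show ?thesis using ne req l0p l1p by (auto simp: inj_on_def)
qed

theorem proposition5p2:
  fixes n k :: nat
  assumes "2 \<le> k" and "k \<le> n"
  shows "inj_on (rhoP n k) (prob_vecs n) \<longleftrightarrow> coprime k n"
  using inj_dir[OF assms] noninj_dir[OF assms] by blast

end
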